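(* Let $N\in\mathbb{N}$, $m,M\in(0,1)$ with $m<M$, and $a_1,\dots,a_N\in[m,M]$. For $i\in[N]$ let $M_i=\frac1N\min\{m+(N-1)M,\ (N-2)(a_i-m)+\sum_{j=1}^Na_j\}$. Let $P$ be the intersection of the box $C=[m,M_1]\times\cdots\times[m,M_N]$ with the closed half-spaces $H_i=\{z\in\mathbb{R}^N\mid\sum_{j=1}^Nz_j\le(2N-2)z_i-(N-2)m\}$, $i\in[N]$. Then $P$ is a closed convex polytope in $\mathbb{R}^N$. For $N>2$, $P$ has at most $2^N$ vertices, and its vertices are exactly the points $z^{(K)}$, $K\subseteq[N]$, defined by $z^{(K)}_k=B^{(K)}$ if $k\in K$ and $z^{(K)}_k=M_k$ if $k\in[N]\setminus K$, where $B^{(K)}=\frac{(N-2)m+\sum_{l\in[N]\setminus K}M_l}{2N-2-|K|}$. For $N=1$, $P=\{m\}$, and for $N=2$, $P=\{(t,t)\in\mathbb{R}^2\mid m\le t\le M_1\}$.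
   Context: $[N]=\{1,\dots,N\}$. *)

theory Defs
  imports "HOL-Analysis.Analysis"
begin

text \<open>Coordinates are indexed by a finite type 'n playing the role of [N]; N = CARD('n).\<close>

definition upperM :: "real \<Rightarrow> real \<Rightarrow> (real^'n) \<Rightarrow> 'n \<Rightarrow> real" where
  "upperM m M a i = (1 / real CARD('n)) *
     min (m + (real CARD('n) - 1) * M)
         ((real CARD('n) - 2) * (a $ i - m) + (\<Sum>j\<in>UNIV. a $ j))"

definition polyP :: "real \<Rightarrow> real \<Rightarrow> (real^'n) \<Rightarrow> (real^'n) set" where
  "polyP m M a =
     {z. \<forall>k. m \<le> z $ k \<and> z $ k \<le> upperM m M a k}
     \<inter> (\<Inter>i\<in>UNIV. {z. (\<Sum>j\<in>UNIV. z $ j)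
                          \<le> (2 * real CARD('n) - 2) * z $ i - (real CARD('n) - 2) * m})"

definition Bval :: "real \<Rightarrow> real \<Rightarrow> (real^'n) \<Rightarrow> 'n set \<Rightarrow> real" where
  "Bval m M a K = ((real CARD('n) - 2) * m + (\<Sum>l\<in>UNIV - K. upperM m M a l))
                  / (2 * real CARD('n) - 2 - real (card K))"

definition zK :: "real \<Rightarrow> real \<Rightarrow> (real^'n) \<Rightarrow> 'n set \<Rightarrow> real^'n" where
  "zK m M a K = (\<chi> k. if k \<in> K then Bval m M a K else upperM m M a k)"

end

theory Submission
  imports Defs
begin

definition QP :: "real \<Rightarrow> ('n::finite \<Rightarrow> real) \<Rightarrow> (real^'n) set" where
 "QP m u = {z. \<forall>k. m \<le> z $ k \<and> z $ k \<le> u k}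
     \<inter> (\<Inter>i\<in>UNIV. {z. (\<Sum>j\<in>UNIV. z $ j)
                          \<le> (2 * real CARD('n) - 2) * z $ i - (real CARD('n) - 2) * m})"

definition BB :: "real \<Rightarrow> ('n::finite \<Rightarrow> real) \<Rightarrow> 'n set \<Rightarrow> real" where
 "BB m u K = ((real CARD('n) - 2) * m + (\<Sum>l\<in>UNIV - K. u l))
                  / (2 * real CARD('n) - 2 - real (card K))"

definition ZZ :: "real \<Rightarrow> ('n::finite \<Rightarrow> real) \<Rightarrow> 'n set \<Rightarrow> real^'n" where
 "ZZ m u K = (\<chi> k. if k \<in> K then BB m u K else u k)"

lemma polyP_QP: "polyP m M a = QP m (upperM m M a)"
  unfolding polyP_def QP_def by simp

lemma zK_ZZ: "zK m M a K = ZZ m (upperM m M a) K"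
  unfolding zK_def ZZ_def BB_def Bval_def by simp

lemma upper_key:
  fixes a :: "real^'n"
  assumes "CARD('n) \<ge> 2" "m < M" "\<And>i. m \<le> a $ i"
  shows "(\<Sum>j\<in>UNIV. upperM m M a j) \<le> (2 * real CARD('n) - 2) * upperM m M a i - (real CARD('n) - 2) * m"
proof -
  define N where "N = real CARD('n)"
  define s where "s = (\<Sum>j\<in>UNIV. a $ j)"
  define A where "A = m + (N - 1) * M"
  define B where "B = (\<lambda>j. (N - 2) * (a $ j - m) + s)"
  have N2: "N \<ge> 2" using assms(1) unfolding N_def by simp
  have u: "upperM m M a j = min A (B j) / N" for j
    unfolding upperM_def A_def B_def N_def s_def by simp
  have sB: "(\<Sum>j\<in>UNIV. B j) = (N-2) * (s - N * m) + N * s"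
    unfolding B_def s_def N_def by (simp add: sum.distrib sum_distrib_left sum_subtractf algebra_simps)
  have sm: "s \<ge> N * m"
  proof -
    have "(\<Sum>j\<in>(UNIV::'n set). m) \<le> s" unfolding s_def by (rule sum_mono) (use assms(3) in auto)
    thus ?thesis by (simp add: N_def)
  qed
  show ?thesis
  proof (cases "A \<le> B i")
    case True
    have "(\<Sum>j\<in>UNIV. upperM m M a j) \<le> (\<Sum>j\<in>(UNIV::'n set). A / N)"
      by (rule sum_mono) (use N2 in \<open>auto simp: u divide_right_mono\<close>)
    also have "\<dots> = A" using N2 by (simp add: N_def)
    also have "A \<le> (2 * N - 2) * (A / N) - (N - 2) * m"
    proof -
      have "A - N * m = (N - 1) * (M - m)" unfolding A_def by (simp add: algebra_simps)
      hence "A - N*m \<ge> 0" using N2 assms(2) by simp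
      hence "(N - 2) * (A - N*m) \<ge> 0" using N2 by simp
      hence "N * A \<le> (2 * N - 2) * A - N * (N - 2) * m" by (simp add: algebra_simps)
      thus ?thesis using N2 by (simp add: field_simps)
    qed
    finally show ?thesis using True by (simp add: u N_def)
  next
    case False
    have "(\<Sum>j\<in>UNIV. upperM m M a j) \<le> (\<Sum>j\<in>(UNIV::'n set). B j / N)"
      by (rule sum_mono) (use N2 in \<open>auto simp: u divide_right_mono\<close>)
    also have "\<dots> = ((N-2) * (s - N * m) + N * s) / N" by (simp add: sum_divide_distrib[symmetric] sB)
    also have "\<dots> \<le> (2 * N - 2) * (B i / N) - (N - 2) * m"
    proof -
      have "0 \<le> (2*N-2)*(N-2)*(a$i - m)" using N2 assms(3)[of i] by simp
      hence "(N-2) * (s - N * m) + N * s \<le> (2 * N - 2) * B i - N * (N - 2) * m"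
        unfolding B_def by (simp add: algebra_simps)
      hence "((N-2) * (s - N * m) + N * s) / N \<le> ((2 * N - 2) * B i - N * (N - 2) * m) / N"
        using N2 by (intro divide_right_mono) auto
      also have "\<dots> = (2 * N - 2) * (B i / N) - (N - 2) * m" using N2 by (simp add: field_simps)
      finally show ?thesis .
    qed
    finally show ?thesis using False by (simp add: u N_def)
  qed
qed

lemma upper_ge:
  fixes a :: "real^'n"
  assumes "m < M" "\<And>i. m \<le> a $ i"
  shows "m \<le> upperM m M a i"
proof -
  define N where "N = real CARD('n)"
  define s where "s = (\<Sum>j\<in>UNIV. a $ j)"
  have N1: "N \<ge> 1" unfolding N_def by simp
  have sm: "s \<ge> N * m"
  proof -
    have "(\<Sum>j\<in>(UNIV::'n set). m) \<le> s" unfolding s_def by (rule sum_mono) (use assms(2) in auto)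
    thus ?thesis by (simp add: N_def)
  qed
  have "(N - 1) * m \<le> (N - 1) * M" using N1 assms(1) by (intro mult_left_mono) auto
  hence "N * m \<le> m + (N - 1) * M" by (simp add: algebra_simps)
  moreover have "N * m \<le> (N - 2) * (a $ i - m) + s"
  proof (cases "N \<ge> 2")
    case True
    have "(N - 2) * (a $ i - m) \<ge> 0" using True assms(2)[of i] by simp
    then show ?thesis using sm by linarith
  next
    case False
    have "CARD('n) \<ge> 1" by (simp add: Suc_leI)
    moreover have "\<not> CARD('n) \<ge> 2" using False unfolding N_def by simp
    ultimately have "CARD('n) = 1" by arith
    hence "N = 1" unfolding N_def by simp
    from \<open>CARD('n) = 1\<close> obtain x where x: "(UNIV::'n set) = {x}" by (metis card_1_singletonE)
    have "i = x" using x by blast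
    hence "s = a $ i" unfolding s_def by (subst x) simp
    thus ?thesis using \<open>N = 1\<close> by simp
  qed
  ultimately have "N * m \<le> min (m + (N - 1) * M) ((N - 2) * (a $ i - m) + s)" by simp
  hence "m \<le> min (m + (N - 1) * M) ((N - 2) * (a $ i - m) + s) / N" using N1
    by (simp add: le_divide_eq mult.commute)
  thus ?thesis unfolding upperM_def by (simp add: N_def s_def)
qed


lemma lower_implied:
  fixes z :: "real^'n"
  assumes N: "CARD('n) > 2"
    and H: "\<And>i. (\<Sum>j\<in>UNIV. z $ j) \<le> (2 * real CARD('n) - 2) * z $ i - (real CARD('n) - 2) * m"
  shows "m \<le> z $ k"
proof -
  define N where "N = real CARD('n)"
  define S where "S = (\<Sum>j\<in>UNIV. z $ j)"
  have N3: "N \<ge> 3" using N unfolding N_def by simp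
  have "(\<Sum>i\<in>(UNIV::'n set). S) \<le> (\<Sum>i\<in>UNIV. (2 * N - 2) * z $ i - (N - 2) * m)"
    by (rule sum_mono) (use H in \<open>simp add: S_def N_def\<close>)
  also have "\<dots> = (2 * N - 2) * S - N * (N - 2) * m"
    by (simp add: sum_subtractf sum_distrib_left[symmetric] S_def N_def)
  finally have "N * S \<le> (2 * N - 2) * S - N * (N - 2) * m" by (simp add: N_def)
  hence "(N - 2) * (N * m) \<le> (N - 2) * S" by (simp add: algebra_simps)
  hence "N * m \<le> S" using N3 by (simp add: mult_le_cancel_left)
  hence "(2 * N - 2) * m \<le> (2 * N - 2) * z $ k" using H[of k] unfolding S_def N_def by (simp add: algebra_simps)
  thus ?thesis using N3 by (simp add: mult_le_cancel_left)
qed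

lemma card_le_N: "card (K::'n::finite set) \<le> CARD('n)"
  by (rule card_mono) auto

lemma BB_bounds:
  fixes u :: "'n::finite \<Rightarrow> real"
  assumes N: "CARD('n) > 2"
    and hu: "\<And>i. (\<Sum>j\<in>UNIV. u j) \<le> (2 * real CARD('n) - 2) * u i - (real CARD('n) - 2) * m"
    and hm: "\<And>i. m \<le> u i"
  shows "m \<le> BB m u K" "BB m u K \<le> u k"
proof -
  define N where "N = real CARD('n)"
  define d where "d = 2 * N - 2 - real (card K)"
  define \<Sigma> where "\<Sigma> = (\<Sum>l\<in>UNIV - K. u l)"
  have N3: "N \<ge> 3" using N unfolding N_def by simp
  have cK: "real (card K) \<le> N" unfolding N_def using card_le_N[of K] by simp
  have dpos: "d > 0" unfolding d_def using cK N3 by simp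
  have B: "BB m u K = ((N - 2) * m + \<Sigma>) / d" unfolding BB_def N_def d_def \<Sigma>_def by simp
  have cD: "real (card (UNIV - K)) = N - real (card K)"
    unfolding N_def by (simp add: card_Diff_subset card_le_N of_nat_diff)
  have "(\<Sum>l\<in>UNIV - K. m) \<le> \<Sigma>" unfolding \<Sigma>_def by (rule sum_mono) (use hm in auto)
  hence s1: "(N - real (card K)) * m \<le> \<Sigma>" using cD by simp
  have "d * m \<le> (N - 2) * m + \<Sigma>" using s1 unfolding d_def by (simp add: algebra_simps)
  thus "m \<le> BB m u K" unfolding B using dpos by (simp add: le_divide_eq mult.commute)
  define \<mu> where "\<mu> = Min (range u)"
  have \<mu>in: "\<mu> \<in> range u" unfolding \<mu>_def by (rule Min_in) auto
  then obtain i0 where i0: "u i0 = \<mu>" by auto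
  have \<mu>le: "\<mu> \<le> u j" for j unfolding \<mu>_def by (rule Min_le) auto
  have "(\<Sum>l\<in>K. \<mu>) \<le> (\<Sum>l\<in>K. u l)" by (rule sum_mono) (use \<mu>le in auto)
  hence sK: "real (card K) * \<mu> \<le> (\<Sum>l\<in>K. u l)" by simp
  have split: "(\<Sum>j\<in>UNIV. u j) = \<Sigma> + (\<Sum>l\<in>K. u l)"
    unfolding \<Sigma>_def by (rule sum.subset_diff) auto
  have "(N - 2) * m + \<Sigma> \<le> d * \<mu>"
    using hu[of i0] split sK i0 unfolding d_def N_def by (simp add: algebra_simps)
  hence "BB m u K \<le> \<mu>" unfolding B using dpos by (simp add: divide_le_eq mult.commute)
  thus "BB m u K \<le> u k" using \<mu>le[of k] by simp
qed

lemma BB_eq: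
  fixes u :: "'n::finite \<Rightarrow> real"
  assumes N: "CARD('n) > 2"
  shows "(2 * real CARD('n) - 2 - real (card K)) * BB m u K = (real CARD('n) - 2) * m + (\<Sum>l\<in>UNIV - K. u l)"
proof -
  have "real (card K) \<le> real CARD('n)" using card_le_N[of K] by simp
  hence "2 * real CARD('n) - 2 - real (card K) \<noteq> 0" using N by simp
  thus ?thesis unfolding BB_def by simp
qed

lemma sum_ifK:
  fixes K :: "'n::finite set"
  shows "(\<Sum>k\<in>UNIV. if k \<in> K then (b::real) else u k) = real (card K) * b + (\<Sum>l\<in>UNIV - K. u l)"
proof -
  have "(\<Sum>k\<in>UNIV. if k \<in> K then b else u k) = (\<Sum>k\<in>UNIV \<inter> {x. x \<in> K}. b) + (\<Sum>k\<in>UNIV \<inter> - {x. x \<in> K}. u k)"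
    by (rule sum.If_cases) auto
  also have "UNIV \<inter> {x. x \<in> K} = K" by auto
  also have "UNIV \<inter> - {x. x \<in> K} = UNIV - K" by auto
  finally show ?thesis by simp
qed

lemma sum_ZZ:
  fixes u :: "'n::finite \<Rightarrow> real"
  assumes N: "CARD('n) > 2"
  shows "(\<Sum>j\<in>UNIV. ZZ m u K $ j) = (2 * real CARD('n) - 2) * BB m u K - (real CARD('n) - 2) * m"
proof -
  have "(\<Sum>j\<in>UNIV. ZZ m u K $ j) = real (card K) * BB m u K + (\<Sum>l\<in>UNIV - K. u l)"
    unfolding ZZ_def by (simp add: sum_ifK)
  also have "\<dots> = (2 * real CARD('n) - 2) * BB m u K - (real CARD('n) - 2) * m"
    using BB_eq[OF N, of K m u] by (simp add: algebra_simps)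
  finally show ?thesis .
qed

lemma ZZ_in:
  fixes u :: "'n::finite \<Rightarrow> real"
  assumes N: "CARD('n) > 2"
    and hu: "\<And>i. (\<Sum>j\<in>UNIV. u j) \<le> (2 * real CARD('n) - 2) * u i - (real CARD('n) - 2) * m"
    and hm: "\<And>i. m \<le> u i"
  shows "ZZ m u K \<in> QP m u"
proof -
  note bb = BB_bounds[OF N hu hm]
  have "(2 * real CARD('n) - 2) * BB m u K \<le> (2 * real CARD('n) - 2) * u i" for i
    using bb(2)[of K i] N by (intro mult_left_mono) auto
  hence H: "(\<Sum>j\<in>UNIV. ZZ m u K $ j) \<le> (2 * real CARD('n) - 2) * ZZ m u K $ i - (real CARD('n) - 2) * m" for i
    unfolding sum_ZZ[OF N] by (auto simp: ZZ_def)
  have B: "m \<le> ZZ m u K $ k \<and> ZZ m u K $ k \<le> u k" for k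
    using bb hm by (auto simp: ZZ_def)
  show ?thesis unfolding QP_def using H B by blast
qed

lemma ZZ_unique:
  fixes u :: "'n::finite \<Rightarrow> real" and x :: "real^'n"
  assumes N: "CARD('n) > 2"
    and out: "\<And>l. l \<notin> K \<Longrightarrow> x $ l = u l"
    and tight: "\<And>k. k \<in> K \<Longrightarrow> (\<Sum>j\<in>UNIV. x $ j) = (2 * real CARD('n) - 2) * x $ k - (real CARD('n) - 2) * m"
  shows "x = ZZ m u K"
proof -
  define N where "N = real CARD('n)"
  define S where "S = (\<Sum>j\<in>UNIV. x $ j)"
  define \<beta> where "\<beta> = (S + (N - 2) * m) / (2 * N - 2)"
  have N3: "N \<ge> 3" using N unfolding N_def by simp
  have xk: "x $ k = \<beta>" if "k \<in> K" for k
    using tight[OF that] N3 unfolding \<beta>_def S_def N_def by (simp add: field_simps)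
  have xe: "x = (\<chi> k. if k \<in> K then \<beta> else u k)"
    by (simp add: vec_eq_iff xk out)
  have "S = real (card K) * \<beta> + (\<Sum>l\<in>UNIV - K. u l)"
    unfolding S_def by (subst xe) (simp add: sum_ifK)
  moreover have "(2 * N - 2) * \<beta> = S + (N - 2) * m" unfolding \<beta>_def using N3 by simp
  ultimately have "(2 * N - 2 - real (card K)) * \<beta> = (N - 2) * m + (\<Sum>l\<in>UNIV - K. u l)"
    by (simp add: algebra_simps)
  moreover have "(2 * N - 2 - real (card K)) \<noteq> 0" using card_le_N[of K] N3 unfolding N_def by simp
  ultimately have beq: "\<beta> = BB m u K" unfolding BB_def N_def by (simp add: field_simps)
  show ?thesis by (simp add: vec_eq_iff ZZ_def xk out beq)
qed


lemma abs_bound: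
  fixes P Q c D :: real
  shows "0 \<le> P \<Longrightarrow> P \<le> c \<Longrightarrow> 0 \<le> Q \<Longrightarrow> Q \<le> c \<Longrightarrow> c \<le> D \<Longrightarrow> \<bar>P - Q\<bar> \<le> D"
  by (simp add: abs_le_iff)

lemma conv_eq_max:
  fixes t p q c :: real
  assumes "0 < t" "t < 1" "p \<le> c" "q \<le> c" "(1 - t) * p + t * q = c"
  shows "p = c \<and> q = c"
proof -
  have a: "(1 - t) * (c - p) \<ge> 0" "t * (c - q) \<ge> 0" using assms by simp_all
  have "(1 - t) * (c - p) + t * (c - q) = 0" using assms(5) by (simp add: algebra_simps)
  hence "(1 - t) * (c - p) = 0" "t * (c - q) = 0" using a by linarith+
  thus ?thesis using assms(1,2) by simp
qed

lemma ZZ_extreme: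
  fixes u :: "'n::finite \<Rightarrow> real"
  assumes N: "CARD('n) > 2"
    and hu: "\<And>i. (\<Sum>j\<in>UNIV. u j) \<le> (2 * real CARD('n) - 2) * u i - (real CARD('n) - 2) * m"
    and hm: "\<And>i. m \<le> u i"
  shows "ZZ m u K extreme_point_of QP m u"
  unfolding extreme_point_of_def
proof (intro conjI ballI)
  show zin: "ZZ m u K \<in> QP m u" by (rule ZZ_in[OF N hu hm])
  fix x y assume x: "x \<in> QP m u" and y: "y \<in> QP m u"
  show "ZZ m u K \<notin> open_segment x y"
  proof
    assume "ZZ m u K \<in> open_segment x y"
    then obtain t where xy: "x \<noteq> y" and t: "0 < t" "t < 1" and zt: "ZZ m u K = (1 - t) *\<^sub>R x + t *\<^sub>R y"
      unfolding in_segment by blast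
    define Z where "Z = ZZ m u K"
    have comp: "Z $ j = (1 - t) * x $ j + t * y $ j" for j unfolding Z_def zt by simp
    have Ssum: "(\<Sum>j\<in>UNIV. Z $ j) = (1 - t) * (\<Sum>j\<in>UNIV. x $ j) + t * (\<Sum>j\<in>UNIV. y $ j)"
      by (simp add: comp sum.distrib sum_distrib_left)
    have xu: "x $ j \<le> u j" and yu: "y $ j \<le> u j" for j using x y unfolding QP_def by auto
    have xH: "(\<Sum>j\<in>UNIV. x $ j) \<le> (2 * real CARD('n) - 2) * x $ i - (real CARD('n) - 2) * m" for i
      using x unfolding QP_def by auto
    have yH: "(\<Sum>j\<in>UNIV. y $ j) \<le> (2 * real CARD('n) - 2) * y $ i - (real CARD('n) - 2) * m" for i
      using y unfolding QP_def by auto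
    have out: "x $ l = u l \<and> y $ l = u l" if "l \<notin> K" for l
    proof (rule conv_eq_max[OF t xu yu])
      show "(1 - t) * x $ l + t * y $ l = u l" using comp[of l] that by (simp add: Z_def ZZ_def)
    qed
    have tight: "(\<Sum>j\<in>UNIV. x $ j) - ((2 * real CARD('n) - 2) * x $ k - (real CARD('n) - 2) * m) = 0
        \<and> (\<Sum>j\<in>UNIV. y $ j) - ((2 * real CARD('n) - 2) * y $ k - (real CARD('n) - 2) * m) = 0"
      if "k \<in> K" for k
    proof (rule conv_eq_max[OF t])
      show "(\<Sum>j\<in>UNIV. x $ j) - ((2 * real CARD('n) - 2) * x $ k - (real CARD('n) - 2) * m) \<le> 0"
        using xH[of k] by simp
      show "(\<Sum>j\<in>UNIV. y $ j) - ((2 * real CARD('n) - 2) * y $ k - (real CARD('n) - 2) * m) \<le> 0"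
        using yH[of k] by simp
      have "Z $ k = BB m u K" using that by (simp add: Z_def ZZ_def)
      hence "(\<Sum>j\<in>UNIV. Z $ j) - ((2 * real CARD('n) - 2) * Z $ k - (real CARD('n) - 2) * m) = 0"
        using sum_ZZ[OF N, of m u K] by (simp add: Z_def)
      hence "(1 - t) * (\<Sum>j\<in>UNIV. x $ j) + t * (\<Sum>j\<in>UNIV. y $ j) - ((2 * real CARD('n) - 2) * ((1 - t) * x $ k + t * y $ k) - (real CARD('n) - 2) * m) = 0"
        unfolding Ssum comp[of k] .
      thus "(1 - t) * ((\<Sum>j\<in>UNIV. x $ j) - ((2 * real CARD('n) - 2) * x $ k - (real CARD('n) - 2) * m))
          + t * ((\<Sum>j\<in>UNIV. y $ j) - ((2 * real CARD('n) - 2) * y $ k - (real CARD('n) - 2) * m)) = 0"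
        by (simp add: algebra_simps)
    qed
    have "x = ZZ m u K" by (rule ZZ_unique[OF N]) (use out tight in auto)
    moreover have "y = ZZ m u K" by (rule ZZ_unique[OF N]) (use out tight in auto)
    ultimately show False using xy by simp
  qed
qed


lemma extreme_is_ZZ:
  fixes u :: "'n::finite \<Rightarrow> real"
  assumes N: "CARD('n) > 2"
    and hu: "\<And>i. (\<Sum>j\<in>UNIV. u j) \<le> (2 * real CARD('n) - 2) * u i - (real CARD('n) - 2) * m"
    and hm: "\<And>i. m \<le> u i"
    and ext: "v extreme_point_of QP m u"
  shows "\<exists>K. v = ZZ m u K"
proof -
  define N where "N = real CARD('n)"
  have N3: "N \<ge> 3" using N unfolding N_def by simp
  have vin: "v \<in> QP m u" using ext by (simp add: extreme_point_of_def)
  define S where "S = (\<Sum>j\<in>UNIV. v $ j)"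
  define g where "g = (\<lambda>j. (2 * N - 2) * v $ j - (N - 2) * m - S)"
  have vu: "v $ j \<le> u j" for j using vin unfolding QP_def by auto
  have g0: "g j \<ge> 0" for j using vin unfolding QP_def g_def S_def N_def by auto
  define F where "F = {j. v $ j = u j}"
  define K where "K = UNIV - F"
  define T where "T = {j. g j = 0}"
  show ?thesis
  proof (cases "K \<subseteq> T")
    case True
    have "v = ZZ m u K"
    proof (rule ZZ_unique[OF N])
      show "v $ l = u l" if "l \<notin> K" for l using that unfolding K_def F_def by auto
      show "(\<Sum>j\<in>UNIV. v $ j) = (2 * real CARD('n) - 2) * v $ k - (real CARD('n) - 2) * m" if "k \<in> K" for k
        using True that unfolding T_def g_def S_def N_def by auto
    qed
    thus ?thesis by blast
  next
    case False
    then obtain i where iK: "i \<in> K" and iT: "i \<notin> T" by blast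
    have vi: "v $ i < u i" using iK vu[of i] unfolding K_def F_def by auto
    have gi: "g i > 0" using iT g0[of i] unfolding T_def by auto
    have TF: "T \<inter> F = {}"
    proof (rule ccontr)
      assume "T \<inter> F \<noteq> {}"
      then obtain j where "j \<in> T" "j \<in> F" by blast
      hence "S = (2 * N - 2) * u j - (N - 2) * m" unfolding T_def F_def g_def by auto
      hence "(\<Sum>j\<in>UNIV. u j) \<le> S" using hu[of j] unfolding N_def by simp
      moreover have "S < (\<Sum>j\<in>UNIV. u j)" unfolding S_def
        by (rule sum_strict_mono_ex1) (use vu vi in auto)
      ultimately show False by simp
    qed
    have cT: "real (card T) \<le> N - 1"
    proof -
      have "card T \<le> card (UNIV - {i})" by (rule card_mono) (use iT in auto)
      also have "\<dots> = CARD('n) - 1" by (simp add: card_Diff_subset)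
      finally show ?thesis unfolding N_def using N by linarith
    qed
    define den where "den = 2 * N - 2 - real (card T)"
    have den: "den \<ge> N - 1" unfolding den_def using cT by simp
    define \<alpha> where "\<alpha> = 1 / den"
    have \<alpha>0: "0 \<le> \<alpha>" and \<alpha>1: "\<alpha> \<le> 1" unfolding \<alpha>_def using den N3 by auto
    have \<alpha>eq: "(2 * N - 2) * \<alpha> = 1 + real (card T) * \<alpha>"
      unfolding \<alpha>_def using den N3 by (simp add: den_def field_simps)
    define d :: "real^'n" where "d = (\<chi> j. (if j = i then 1 else 0) + (if j \<in> T then \<alpha> else 0))"
    have dT: "d $ j = \<alpha>" if "j \<in> T" for j using that iT unfolding d_def by auto
    have dF: "d $ j = 0" if "j \<in> F" for j using that TF iK unfolding d_def K_def by auto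
    have dabs: "0 \<le> d $ j \<and> d $ j \<le> 1" for j using iT \<alpha>0 \<alpha>1 unfolding d_def by auto
    have di: "d $ i = 1" using iT unfolding d_def by auto
    have sd: "(\<Sum>j\<in>UNIV. d $ j) = 1 + real (card T) * \<alpha>"
    proof -
      have "(\<Sum>j\<in>UNIV. d $ j) = (\<Sum>j\<in>UNIV. (if j = i then 1 else 0)) + (\<Sum>j\<in>UNIV. (if j \<in> T then \<alpha> else (0::real)))"
        unfolding d_def by (simp add: sum.distrib)
      also have "(\<Sum>j\<in>UNIV. (if j \<in> T then \<alpha> else (0::real))) = real (card T) * \<alpha>"
        using sum_ifK[of T \<alpha> "\<lambda>_. 0"] by simp
      finally show ?thesis by simp
    qed
    define h1 where "h1 = (\<lambda>j. if j \<in> F then 1 else u j - v $ j)"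
    define h2 where "h2 = (\<lambda>j. if j \<in> T then 1 else g j)"
    have h1p: "h1 j > 0" for j using vu[of j] unfolding h1_def F_def by auto
    have h2p: "h2 j > 0" for j using g0[of j] unfolding h2_def T_def by auto
    define \<delta> where "\<delta> = min (Min (range h1)) (Min (range h2))"
    have \<delta>p: "\<delta> > 0" unfolding \<delta>_def using h1p h2p by (simp add: Min_gr_iff)
    have \<delta>1: "\<delta> \<le> h1 j" and \<delta>2: "\<delta> \<le> h2 j" for j
      unfolding \<delta>_def by (simp_all add: min.coboundedI1 min.coboundedI2 Min_le)
    define \<epsilon> where "\<epsilon> = \<delta> / (4 * N)"
    have \<epsilon>p: "\<epsilon> > 0" unfolding \<epsilon>_def using \<delta>p N3 by simp
    have \<epsilon>4: "\<epsilon> * (4 * N) = \<delta>" unfolding \<epsilon>_def using N3 by simp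
    have mem: "v + e *\<^sub>R d \<in> QP m u" if e: "\<bar>e\<bar> \<le> \<epsilon>" for e
    proof -
      define w where "w = v + e *\<^sub>R d"
      have wc: "w $ j = v $ j + e * d $ j" for j unfolding w_def by simp
      have Sw: "(\<Sum>j\<in>UNIV. w $ j) = S + e * (1 + real (card T) * \<alpha>)"
        unfolding wc S_def by (simp add: sum.distrib sum_distrib_left[symmetric] sd)
      have up: "w $ j \<le> u j" for j
      proof (cases "j \<in> F")
        case True thus ?thesis using dF[OF True] vu[of j] by (simp add: wc)
      next
        case False
        have "\<bar>e * d $ j\<bar> \<le> \<epsilon> * 1" unfolding abs_mult
          using e dabs[of j] \<epsilon>p by (intro mult_mono) auto
        also have "\<epsilon> * 1 \<le> \<epsilon> * (4 * N)" by (rule mult_left_mono) (use N3 \<epsilon>p in auto)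
        also have "\<dots> = \<delta>" by (rule \<epsilon>4)
        also have "\<delta> \<le> u j - v $ j" using \<delta>1[of j] False unfolding h1_def by simp
        finally show ?thesis unfolding wc by linarith
      qed
      have H: "(\<Sum>j\<in>UNIV. w $ j) \<le> (2 * N - 2) * w $ j - (N - 2) * m" for j
      proof (cases "j \<in> T")
        case True
        have "(2 * N - 2) * w $ j - (N - 2) * m - (\<Sum>j\<in>UNIV. w $ j) = g j + e * ((2 * N - 2) * \<alpha> - (1 + real (card T) * \<alpha>))"
          unfolding Sw unfolding wc[of j] dT[OF True] g_def by (simp add: algebra_simps)
        also have "\<dots> = 0" using True \<alpha>eq unfolding T_def by simp
        finally show ?thesis by simp
      next
        case False
        define X where "X = (2 * N - 2) * d $ j - (1 + real (card T) * \<alpha>)"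
        have "(2 * N - 2) * w $ j - (N - 2) * m - (\<Sum>j\<in>UNIV. w $ j) = g j + e * X"
          unfolding Sw unfolding wc[of j] g_def X_def by (simp add: algebra_simps)
        moreover have "\<bar>X\<bar> \<le> 4 * N"
        proof -
          have "0 \<le> (2 * N - 2) * d $ j" "(2 * N - 2) * d $ j \<le> (2 * N - 2) * 1"
            using dabs[of j] N3 by (auto intro: mult_left_mono)
          moreover have "0 \<le> 1 + real (card T) * \<alpha>" using \<alpha>0 by simp
          moreover have "1 + real (card T) * \<alpha> \<le> (2 * N - 2) * 1"
            unfolding \<alpha>eq[symmetric] using \<alpha>1 N3 by (intro mult_left_mono) auto
          moreover have "(2 * N - 2) * 1 \<le> 4 * N" using N3 by simp
          ultimately show ?thesis unfolding X_def by (rule abs_bound)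
        qed
        hence "\<bar>e * X\<bar> \<le> \<epsilon> * (4 * N)" unfolding abs_mult using e by (intro mult_mono) auto
        hence "\<bar>e * X\<bar> \<le> g j" using \<epsilon>4 \<delta>2[of j] False unfolding h2_def T_def by simp
        ultimately show ?thesis by linarith
      qed
      have lo: "m \<le> w $ j" for j
        by (rule lower_implied[OF N]) (use H in \<open>simp add: N_def\<close>)
      show ?thesis unfolding w_def[symmetric] QP_def using up lo H unfolding N_def by auto
    qed
    have p: "v + \<epsilon> *\<^sub>R d \<in> QP m u" using mem[of \<epsilon>] \<epsilon>p by simp
    have q: "v + (- \<epsilon>) *\<^sub>R d \<in> QP m u" using mem[of "-\<epsilon>"] \<epsilon>p by simp
    have ne: "v + \<epsilon> *\<^sub>R d \<noteq> v + (- \<epsilon>) *\<^sub>R d"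
    proof
      assume "v + \<epsilon> *\<^sub>R d = v + (- \<epsilon>) *\<^sub>R d"
      hence "(v + \<epsilon> *\<^sub>R d) $ i = (v + (- \<epsilon>) *\<^sub>R d) $ i" by (rule arg_cong)
      hence "v $ i + \<epsilon> * d $ i = v $ i + (- \<epsilon>) * d $ i"
        by (simp only: vector_add_component vector_scaleR_component real_scaleR_def)
      thus False using di \<epsilon>p by simp
    qed
    have "v \<in> open_segment (v + \<epsilon> *\<^sub>R d) (v + (- \<epsilon>) *\<^sub>R d)"
      unfolding in_segment
    proof (intro conjI ne exI[of _ "1/2"])
      show "v = (1 - 1 / 2) *\<^sub>R (v + \<epsilon> *\<^sub>R d) + (1 / 2) *\<^sub>R (v + (- \<epsilon>) *\<^sub>R d)"
        by (simp add: vec_eq_iff algebra_simps)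
    qed auto
    thus ?thesis using ext p q unfolding extreme_point_of_def by blast
  qed
qed


lemma QP_polytope:
  fixes u :: "'n::finite \<Rightarrow> real"
  shows "polytope (QP m u)"
proof -
  define c where "c = 2 * real CARD('n) - 2"
  define w :: "'n \<Rightarrow> real^'n" where "w = (\<lambda>i. \<chi> j. 1 - (if j = i then c else 0))"
  define H where "H = (\<lambda>i. {z::real^'n. w i \<bullet> z \<le> - ((real CARD('n) - 2) * m)})"
  have wz: "w i \<bullet> z = (\<Sum>j\<in>UNIV. z $ j) - c * z $ i" for i z
  proof -
    have "w i \<bullet> z = (\<Sum>j\<in>UNIV. z $ j - (if j = i then c * z $ j else 0))"
      unfolding w_def inner_vec_def by (intro sum.cong) (auto simp: algebra_simps)
    also have "\<dots> = (\<Sum>j\<in>UNIV. z $ j) - c * z $ i" by (simp add: sum_subtractf)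
    finally show ?thesis .
  qed
  have eq: "QP m u = cbox (\<chi> k. m) (\<chi> k. u k) \<inter> \<Inter> (range H)"
    unfolding QP_def H_def wz c_def by (auto simp: mem_box_cart algebra_simps)
  have "polyhedron (\<Inter> (range H))"
    by (rule polyhedron_Inter) (auto simp: H_def polyhedron_halfspace_le)
  thus ?thesis unfolding eq by (intro polytope_Int_polyhedron polytope_interval)
qed

theorem proposition8:
  fixes m M :: real and a :: "real^'n"
  assumes "0 < m" "m < M" "M < 1"
    and "\<And>i. a $ i \<in> {m..M}"
  shows "polytope (polyP m M a) \<and> closed (polyP m M a) \<and> convex (polyP m M a)
    \<and> (CARD('n) > 2 \<longrightarrow>
          {v. v extreme_point_of (polyP m M a)} = zK m M a ` Pow UNIV
        \<and> card {v. v extreme_point_of (polyP m M a)} \<le> 2 ^ CARD('n))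
    \<and> (CARD('n) = 1 \<longrightarrow> polyP m M a = {\<chi> k. m})
    \<and> (CARD('n) = 2 \<longrightarrow> (\<forall>i. polyP m M a = {(\<chi> k. t) | t. m \<le> t \<and> t \<le> upperM m M a i}))"
proof -
  define u where "u = upperM m M a"
  have am: "\<And>i. m \<le> a $ i" using assms(4) by auto
  have hm: "\<And>i. m \<le> u i" unfolding u_def by (rule upper_ge[OF assms(2) am])
  have P: "polyP m M a = QP m u" unfolding u_def by (rule polyP_QP)
  have poly: "polytope (polyP m M a)" unfolding P by (rule QP_polytope)
  have part3: "CARD('n) > 2 \<longrightarrow>
          {v. v extreme_point_of (polyP m M a)} = zK m M a ` Pow UNIV
        \<and> card {v. v extreme_point_of (polyP m M a)} \<le> 2 ^ CARD('n)"
  proof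
    assume N: "CARD('n) > 2"
    have hu: "\<And>i. (\<Sum>j\<in>UNIV. u j) \<le> (2 * real CARD('n) - 2) * u i - (real CARD('n) - 2) * m"
      unfolding u_def by (rule upper_key) (use N assms(2) am in auto)
    have img: "zK m M a ` Pow UNIV = ZZ m u ` Pow UNIV" unfolding u_def zK_ZZ by simp
    have E: "{v. v extreme_point_of (polyP m M a)} = zK m M a ` Pow UNIV"
    proof
      show "{v. v extreme_point_of polyP m M a} \<subseteq> zK m M a ` Pow UNIV"
        unfolding img P using extreme_is_ZZ[OF N hu hm] by blast
      show "zK m M a ` Pow UNIV \<subseteq> {v. v extreme_point_of polyP m M a}"
        unfolding img P using ZZ_extreme[OF N hu hm] by blast
    qed
    have "card (zK m M a ` Pow (UNIV::'n set)) \<le> card (Pow (UNIV::'n set))" by (rule card_image_le) simp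
    also have "\<dots> = 2 ^ CARD('n)" by (simp add: card_Pow)
    finally show "{v. v extreme_point_of (polyP m M a)} = zK m M a ` Pow UNIV
        \<and> card {v. v extreme_point_of (polyP m M a)} \<le> 2 ^ CARD('n)" using E by simp
  qed
  have part1: "CARD('n) = 1 \<longrightarrow> polyP m M a = {\<chi> k. m}"
  proof
    assume N: "CARD('n) = 1"
    then obtain x where x: "(UNIV::'n set) = {x}" by (metis card_1_singletonE)
    have ux: "u k \<le> m" for k unfolding u_def upperM_def using N by simp
    have uk: "u k = m" for k using ux[of k] hm[of k] by simp
    have sx: "(\<Sum>j\<in>UNIV. z $ j) = z $ x" for z :: "real^'n" by (subst x) simp
    have kx: "k = x" for k :: 'n using x by blast
    show "polyP m M a = {\<chi> k. m}"
    proof (intro equalityI subsetI)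
      fix z assume "z \<in> polyP m M a"
      hence "m \<le> z $ k \<and> z $ k \<le> m" for k unfolding P QP_def using uk by auto
      hence "z = (\<chi> k. m)" by (simp add: vec_eq_iff antisym)
      thus "z \<in> {\<chi> k. m}" by simp
    next
      fix z :: "real^'n" assume "z \<in> {\<chi> k. m}"
      hence z: "z = (\<chi> k. m)" by simp
      show "z \<in> polyP m M a" unfolding P QP_def z using uk N by (simp add: sx)
    qed
  qed
  have part2: "CARD('n) = 2 \<longrightarrow> (\<forall>i. polyP m M a = {(\<chi> k. t) | t. m \<le> t \<and> t \<le> upperM m M a i})"
  proof (intro impI allI)
    fix i
    assume N: "CARD('n) = 2"
    then obtain x y where xy: "(UNIV::'n set) = {x, y}" "x \<noteq> y" by (metis card_2_iff)
    have uc: "u k = u i" for k unfolding u_def upperM_def using N by simp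
    have sxy: "(\<Sum>j\<in>UNIV. z $ j) = z $ x + z $ y" for z :: "real^'n" by (subst xy(1)) (simp add: xy(2))
    have kxy: "k = x \<or> k = y" for k :: 'n using xy by blast
    show "polyP m M a = {(\<chi> k. t) | t. m \<le> t \<and> t \<le> upperM m M a i}"
    proof (intro equalityI subsetI)
      fix z assume "z \<in> polyP m M a"
      hence zb0: "m \<le> z $ k \<and> z $ k \<le> u k" and zh: "z $ x + z $ y \<le> 2 * z $ k" for k
        unfolding P QP_def using N by (auto simp: sxy)
      have zb: "m \<le> z $ k \<and> z $ k \<le> u i" for k using zb0[of k] uc[of k] by simp
      have "z $ x = z $ y" using zh[of x] zh[of y] by simp
      hence "z = (\<chi> k. z $ x)" unfolding vec_eq_iff by (metis kxy vec_lambda_beta)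
      thus "z \<in> {(\<chi> k. t) | t. m \<le> t \<and> t \<le> upperM m M a i}" using zb[of x] unfolding u_def by blast
    next
      fix z :: "real^'n" assume "z \<in> {(\<chi> k. t) | t. m \<le> t \<and> t \<le> upperM m M a i}"
      then obtain t where z: "z = (\<chi> k. t)" "m \<le> t" "t \<le> u i" unfolding u_def by blast
      have tu: "\<forall>k. t \<le> u k" using z(3) uc by metis
      show "z \<in> polyP m M a" unfolding P QP_def using z tu N by (simp add: sxy)
    qed
  qed
  show ?thesis using poly polytope_imp_closed[OF poly] polytope_imp_convex[OF poly] part1 part2 part3
    by blast
qed

end
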